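(* Let $(X,d)$ be a Cantor space. Then there exists $f\in\mathcal{H}(X)$ which has the continuous shadowing property but is not topologically stable.
   Context: A Cantor space is a compact metric space without isolated points that is totally disconnected. $\mathcal{H}(X)$ is the set of homeomorphisms; $d_{C^0}(f,g)=\sup_x d(f(x),g(x))$; $D(f,g)=\max\{d_{C^0}(f,g),d_{C^0}(f^{-1},g^{-1})\}$. $f$ is topologically stable if for every $\epsilon>0$ there is $\delta>0$ such that for every $g\in\mathcal{H}(X)$ with $D(f,g)<\delta$ there is a continuous $h:X\to X$ with $d_{C^0}(h,\mathrm{id}_X)<\epsilon$ and $h\circ g=f\circ h$. With $\tilde d(x,y)=\sup_{i\in\mathbb{Z}}2^{-|i|}d(x_i,y_i)$ on $X^{\mathbb{Z}}$ and $P(f,\delta)$ the set of $(x_i)_{i\in\mathbb{Z}}$ with $d(f(x_i),x_{i+1})\le\delta$ for all $i$, $f$ has the continuous shadowing property if for every $\epsilon>0$ there are $\delta>0$ and a continuous $r:P(f,\delta)\to X$ with $d(f^i(r(x)),x_i)\le\epsilon$ for all $x\in P(f,\delta)$, $i\in\mathbb{Z}$. *)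

theory Defs
  imports "HOL-Analysis.Analysis"
begin

definition totally_disconnected :: "'a::metric_space set \<Rightarrow> bool" where
  "totally_disconnected X \<longleftrightarrow> (\<forall>S. S \<subseteq> X \<and> connected S \<longrightarrow> (\<exists>a. S \<subseteq> {a}))"

definition cantor_space :: "'a::metric_space set \<Rightarrow> bool" where
  "cantor_space X \<longleftrightarrow> X \<noteq> {} \<and> compact X \<and> (\<forall>x\<in>X. x islimpt X) \<and> totally_disconnected X"

text \<open>Homeomorphisms of X (values outside X are irrelevant).\<close>
definition homeos :: "'a::metric_space set \<Rightarrow> ('a \<Rightarrow> 'a) set" where
  "homeos X = {f. \<exists>g. homeomorphism X X f g}"

definition dC0 :: "'a::metric_space set \<Rightarrow> ('a \<Rightarrow> 'a) \<Rightarrow> ('a \<Rightarrow> 'a) \<Rightarrow> real" where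
  "dC0 X f g = (SUP x\<in>X. dist (f x) (g x))"

definition Dhom :: "'a::metric_space set \<Rightarrow> ('a \<Rightarrow> 'a) \<Rightarrow> ('a \<Rightarrow> 'a) \<Rightarrow> real" where
  "Dhom X f g = max (dC0 X f g) (dC0 X (inv_into X f) (inv_into X g))"

definition topologically_stable :: "'a::metric_space set \<Rightarrow> ('a \<Rightarrow> 'a) \<Rightarrow> bool" where
  "topologically_stable X f \<longleftrightarrow>
     (\<forall>\<epsilon>>0. \<exists>\<delta>>0. \<forall>g\<in>homeos X. Dhom X f g < \<delta> \<longrightarrow>
        (\<exists>h. continuous_on X h \<and> h ` X \<subseteq> X \<and> dC0 X h id < \<epsilon> \<and>
             (\<forall>x\<in>X. h (g x) = f (h x))))"

definition iter_int :: "'a set \<Rightarrow> ('a \<Rightarrow> 'a) \<Rightarrow> int \<Rightarrow> 'a \<Rightarrow> 'a" where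
  "iter_int X f i = (if 0 \<le> i then f ^^ nat i else inv_into X f ^^ nat (- i))"

definition dtilde :: "(int \<Rightarrow> 'a::metric_space) \<Rightarrow> (int \<Rightarrow> 'a) \<Rightarrow> real" where
  "dtilde x y = (SUP i. (1/2) ^ nat \<bar>i\<bar> * dist (x i) (y i))"

definition pseudo_orbits :: "'a::metric_space set \<Rightarrow> ('a \<Rightarrow> 'a) \<Rightarrow> real \<Rightarrow> (int \<Rightarrow> 'a) set" where
  "pseudo_orbits X f \<delta> = {x. (\<forall>i. x i \<in> X) \<and> (\<forall>i. dist (f (x i)) (x (i + 1)) \<le> \<delta>)}"

definition continuous_shadowing :: "'a::metric_space set \<Rightarrow> ('a \<Rightarrow> 'a) \<Rightarrow> bool" where
  "continuous_shadowing X f \<longleftrightarrow>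
     (\<forall>\<epsilon>>0. \<exists>\<delta>>0. \<exists>r. (\<forall>x\<in>pseudo_orbits X f \<delta>. r x \<in> X) \<and>
        (\<forall>x\<in>pseudo_orbits X f \<delta>. \<forall>e>0. \<exists>\<eta>>0. \<forall>y\<in>pseudo_orbits X f \<delta>.
            dtilde x y < \<eta> \<longrightarrow> dist (r x) (r y) < e) \<and>
        (\<forall>x\<in>pseudo_orbits X f \<delta>. \<forall>i. dist (iter_int X f i (r x)) (x i) \<le> \<epsilon>))"

end

theory Submission
  imports Defs
begin



definition clop :: "'a::metric_space set \<Rightarrow> 'a set \<Rightarrow> bool" where
  "clop X U \<longleftrightarrow> U \<subseteq> X \<and> compact U \<and> openin (top_of_set X) U"

lemma small_clopen:
  fixes X :: "'a::metric_space set"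
  assumes "cantor_space X" "x \<in> X" "e > 0"
  shows "\<exists>U. x \<in> U \<and> U \<subseteq> ball x e \<and> clop X U"
proof -
  have cX: "compact X" using assms unfolding cantor_space_def by auto
  have td: "totally_disconnected X" using assms unfolding cantor_space_def by auto
  have lc: "locally_compact_space (top_of_set X)"
    by (simp add: cX compact_imp_locally_compact_space compact_space_subtopology)
  have H: "Hausdorff_space (top_of_set X)" 
    by (simp add: Hausdorff_space_subtopology)
  have cc: "connected_component_of_set (top_of_set X) x = {x}"
  proof -
    have "connectedin (top_of_set X) (connected_component_of_set (top_of_set X) x)"
      by (rule connectedin_connected_component_of)
    then have "connected_component_of_set (top_of_set X) x \<subseteq> X \<and> connected (connected_component_of_set (top_of_set X) x)"
      by (simp add: connectedin_subtopology)
    then obtain a where "connected_component_of_set (top_of_set X) x \<subseteq> {a}"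
      using td unfolding totally_disconnected_def by blast
    moreover have "x \<in> connected_component_of_set (top_of_set X) x"
      using assms(2) by (simp add: connected_component_of_refl)
    ultimately show ?thesis by blast
  qed
  have C: "{x} \<in> connected_components_of (top_of_set X)"
    using cc assms(2) unfolding connected_components_of_def by force
  have W: "openin (top_of_set X) (X \<inter> ball x e)"
    by (simp add: openin_open_Int)
  obtain U V where UV: "openin (top_of_set X) U" "openin (top_of_set X) V" "disjnt U V"
     "U \<union> V = topspace (top_of_set X)" "{x} \<subseteq> U" "U \<subseteq> X \<inter> ball x e"
    using wilder_locally_compact_component_thm[OF lc H C _ W] assms(2,3) by auto
  have "closedin (top_of_set X) U"
  proof -
    have "U = X - V" using UV by (auto simp: disjnt_def)
    then show ?thesis using UV(2) by auto
  qed
  then have "compact U" using cX closedin_compact by blast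
  then show ?thesis using UV unfolding clop_def by auto
qed

lemma clop_X: "compact X \<Longrightarrow> clop X X"
  by (simp add: clop_def)

lemma clop_Int: "clop X A \<Longrightarrow> clop X B \<Longrightarrow> clop X (A \<inter> B)"
  unfolding clop_def by (auto simp: compact_Int openin_Int intro: compact_imp_closed)

lemma clop_Diff: assumes "clop X A" "clop X B" shows "clop X (A - B)"
proof -
  obtain T where T: "open T" "B = X \<inter> T" using assms(2) unfolding clop_def by (auto simp: openin_open)
  have "A - B = A - T" using T assms(1) unfolding clop_def by auto
  then have c: "compact (A - B)" using assms(1) T(1) unfolding clop_def by (simp add: compact_diff)
  have "closedin (top_of_set X) B" using assms(2) unfolding clop_def
    by (meson closed_subset compact_imp_closed)
  then have "openin (top_of_set X) (A - B)" using assms(1) unfolding clop_def by (simp add: openin_diff)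
  with c show ?thesis using assms(1) unfolding clop_def by auto
qed

lemma clop_split:
  fixes X :: "'a::metric_space set"
  assumes "cantor_space X" "clop X C" "C \<noteq> {}"
  shows "\<exists>A. clop X A \<and> A \<subseteq> C \<and> A \<noteq> {} \<and> C - A \<noteq> {}"
proof -
  obtain x where x: "x \<in> C" using assms(3) by auto
  obtain T where T: "open T" "C = X \<inter> T" using assms(2) unfolding clop_def by (auto simp: openin_open)
  obtain r where r: "r > 0" "ball x r \<subseteq> T" using T x by (meson IntD2 open_contains_ball)
  have xX: "x \<in> X" using x T by auto
  then have "x islimpt X" using assms(1) unfolding cantor_space_def by auto
  then obtain y where y: "y \<in> X" "y \<noteq> x" "dist y x < r" using r(1) by (meson islimpt_approachable)
  have yC: "y \<in> C" using y r T by (auto simp: dist_commute)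
  have "dist x y > 0" using y by simp
  then obtain U where U: "x \<in> U" "U \<subseteq> ball x (dist x y)" "clop X U"
    using small_clopen[OF assms(1) xX] by blast
  have "y \<notin> U" using U(2) by auto
  then show ?thesis using U x yC clop_Int[OF assms(2) U(3)] by (intro exI[of _ "C \<inter> U"]) auto
qed

lemma finite_clop_cover:
  fixes X :: "'a::metric_space set"
  assumes "cantor_space X" "e > 0"
  shows "\<exists>F. finite F \<and> (\<forall>U\<in>F. clop X U \<and> (\<forall>a\<in>U. \<forall>b\<in>U. dist a b < e)) \<and> X \<subseteq> \<Union>F"
proof -
  have cX: "compact X" using assms unfolding cantor_space_def by auto
  have "\<forall>x\<in>X. \<exists>U T. x \<in> U \<and> U \<subseteq> ball x (e/2) \<and> clop X U \<and> open T \<and> U = X \<inter> T"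
  proof
    fix x assume "x \<in> X"
    then obtain U where U: "x \<in> U" "U \<subseteq> ball x (e/2)" "clop X U"
      using small_clopen[OF assms(1)] assms(2) by (meson half_gt_zero)
    then obtain T where "open T" "U = X \<inter> T" unfolding clop_def by (auto simp: openin_open)
    then show "\<exists>U T. x \<in> U \<and> U \<subseteq> ball x (e/2) \<and> clop X U \<and> open T \<and> U = X \<inter> T"
      using U by blast
  qed
  then obtain U T where UT: "\<And>x. x \<in> X \<Longrightarrow> x \<in> U x \<and> U x \<subseteq> ball x (e/2) \<and> clop X (U x) \<and> open (T x) \<and> U x = X \<inter> T x"
    by metis
  have "X \<subseteq> (\<Union>x\<in>X. T x)" using UT by blast
  then obtain C' where C': "C' \<subseteq> X" "finite C'" "X \<subseteq> (\<Union>x\<in>C'. T x)"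
    using compactE_image[OF cX, of X T] UT by metis
  have small: "\<forall>a\<in>U x. \<forall>b\<in>U x. dist a b < e" if "x \<in> X" for x
  proof (intro ballI)
    fix a b assume "a \<in> U x" "b \<in> U x"
    then have "dist x a < e/2" "dist x b < e/2" using UT[OF that] by auto
    moreover have "dist a b \<le> dist x a + dist x b" using dist_triangle[of a b x] by (simp add: dist_commute)
    ultimately show "dist a b < e" by linarith
  qed
  show ?thesis
  proof (intro exI[of _ "U ` C'"] conjI)
    show "finite (U ` C')" using C' by simp
    show "\<forall>V\<in>U ` C'. clop X V \<and> (\<forall>a\<in>V. \<forall>b\<in>V. dist a b < e)" using C' UT small by blast
    show "X \<subseteq> \<Union>(U ` C')" using C' UT by blast
  qed
qed

lemma sep_seq:
  fixes X :: "'a::metric_space set"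
  assumes "cantor_space X"
  shows "\<exists>W::nat \<Rightarrow> 'a set. (\<forall>j. clop X (W j)) \<and>
     (\<forall>e>0. \<exists>J. \<forall>a\<in>X. \<forall>b\<in>X. (\<forall>j<J. a \<in> W j \<longleftrightarrow> b \<in> W j) \<longrightarrow> dist a b < e)"
proof -
  have "\<forall>m::nat. \<exists>F. finite F \<and> (\<forall>U\<in>F. clop X U \<and> (\<forall>a\<in>U. \<forall>b\<in>U. dist a b < 1/(Suc m))) \<and> X \<subseteq> \<Union>F"
    using finite_clop_cover[OF assms] by simp
  then obtain F where F: "\<And>m. finite (F m) \<and> (\<forall>U\<in>F m. clop X U \<and> (\<forall>a\<in>U. \<forall>b\<in>U. dist a b < 1/(Suc m))) \<and> X \<subseteq> \<Union>(F m)"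
    by metis
  define G where "G = (\<Union>m. F m)"
  have Xne: "X \<noteq> {}" using assms unfolding cantor_space_def by auto
  have Gc: "countable G" unfolding G_def
  proof (rule countable_UN)
    fix m show "countable (F m)" using F[of m] by (simp add: countable_finite)
  qed simp
  have Gne: "G \<noteq> {}" using F[of 0] Xne unfolding G_def by blast
  define W where "W = from_nat_into G"
  have rW: "range W = G" unfolding W_def using Gc Gne by (simp add: range_from_nat_into)
  have W1: "\<forall>j. clop X (W j)"
  proof
    fix j
    have "W j \<in> G" using rW by (metis rangeI)
    then obtain m where "W j \<in> F m" unfolding G_def by blast
    then show "clop X (W j)" using F[of m] by blast
  qed
  have W2: "\<exists>J. \<forall>a\<in>X. \<forall>b\<in>X. (\<forall>j<J. (a \<in> W j) = (b \<in> W j)) \<longrightarrow> dist a b < e" if e: "e > 0" for e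
  proof -
    obtain m where m: "1 / real (Suc m) < e" using e by (metis nat_approx_posE)
    have "F m \<subseteq> range W" using rW unfolding G_def by blast
    moreover have "finite (F m)" using F[of m] by blast
    ultimately obtain C where C: "finite C" "F m = W ` C"
      using finite_subset_image[of "F m" W UNIV] by blast
    then obtain J where J: "C \<subseteq> {..<J}" using finite_nat_iff_bounded by blast
    show "\<exists>J. \<forall>a\<in>X. \<forall>b\<in>X. (\<forall>j<J. (a \<in> W j) = (b \<in> W j)) \<longrightarrow> dist a b < e"
    proof (intro exI[of _ J] ballI impI)
      fix a b assume a: "a \<in> X" and b: "b \<in> X" and ab: "\<forall>j<J. (a \<in> W j) = (b \<in> W j)"
      obtain U where U: "U \<in> F m" "a \<in> U" using F[of m] a by blast
      obtain j where j: "j \<in> C" "U = W j" using C U by blast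
      have "b \<in> U" using ab j J U by auto
      have "\<forall>a\<in>U. \<forall>b\<in>U. dist a b < 1/(Suc m)" using F[of m] U(1) by blast
      then have "dist a b < 1/(Suc m)" using U(2) \<open>b \<in> U\<close> by blast
      then show "dist a b < e" using m by linarith
    qed
  qed
  show ?thesis using W1 W2 by blast
qed

definition splitA :: "'a::metric_space set \<Rightarrow> (nat \<Rightarrow> 'a set) \<Rightarrow> nat \<Rightarrow> 'a set \<Rightarrow> 'a set" where
  "splitA X W j C = (if C \<inter> W j \<noteq> {} \<and> C - W j \<noteq> {} then C \<inter> W j
      else (SOME A. clop X A \<and> A \<subseteq> C \<and> A \<noteq> {} \<and> C - A \<noteq> {}))"

definition child :: "'a::metric_space set \<Rightarrow> (nat \<Rightarrow> 'a set) \<Rightarrow> nat \<Rightarrow> 'a set \<Rightarrow> bool \<Rightarrow> 'a set" where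
  "child X W j C b = (if b then splitA X W j C else C - splitA X W j C)"

primrec node :: "'a::metric_space set \<Rightarrow> (nat \<Rightarrow> 'a set) \<Rightarrow> (nat \<Rightarrow> bool) \<Rightarrow> nat \<Rightarrow> 'a set" where
  "node X W z 0 = X"
| "node X W z (Suc n) = child X W n (node X W z n) (z n)"

primrec Pn :: "'a::metric_space set \<Rightarrow> (nat \<Rightarrow> 'a set) \<Rightarrow> 'a \<Rightarrow> nat \<Rightarrow> 'a set" where
  "Pn X W x 0 = X"
| "Pn X W x (Suc n) = child X W n (Pn X W x n) (x \<in> splitA X W n (Pn X W x n))"

definition phi :: "'a::metric_space set \<Rightarrow> (nat \<Rightarrow> 'a set) \<Rightarrow> 'a \<Rightarrow> nat \<Rightarrow> bool" where
  "phi X W x n = (x \<in> splitA X W n (Pn X W x n))"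

lemma splitA_props:
  assumes "cantor_space X" "\<forall>j. clop X (W j)" "clop X C" "C \<noteq> {}"
  shows "clop X (splitA X W j C) \<and> splitA X W j C \<subseteq> C \<and> splitA X W j C \<noteq> {} \<and> C - splitA X W j C \<noteq> {}"
proof (cases "C \<inter> W j \<noteq> {} \<and> C - W j \<noteq> {}")
  case True
  have "clop X (C \<inter> W j)" using clop_Int assms(2,3) by blast
  then show ?thesis using True by (auto simp: splitA_def)
next
  case False
  have ex: "\<exists>A. clop X A \<and> A \<subseteq> C \<and> A \<noteq> {} \<and> C - A \<noteq> {}" using clop_split[OF assms(1,3,4)] .
  have eq: "splitA X W j C = (SOME A. clop X A \<and> A \<subseteq> C \<and> A \<noteq> {} \<and> C - A \<noteq> {})"
    unfolding splitA_def by (rule if_not_P[OF False])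
  show ?thesis unfolding eq by (rule someI_ex[OF ex])
qed

lemma child_props:
  assumes "cantor_space X" "\<forall>j. clop X (W j)" "clop X C" "C \<noteq> {}"
  shows "clop X (child X W j C b) \<and> child X W j C b \<subseteq> C \<and> child X W j C b \<noteq> {}"
  using splitA_props[OF assms, of j] clop_Diff[OF assms(3)] unfolding child_def by auto

lemma child_sep:
  assumes "cantor_space X" "\<forall>j. clop X (W j)" "clop X C" "C \<noteq> {}"
  shows "child X W j C b \<subseteq> W j \<or> child X W j C b \<inter> W j = {}"
proof (cases "C \<inter> W j \<noteq> {} \<and> C - W j \<noteq> {}")
  case True
  then show ?thesis unfolding child_def splitA_def by auto
next
  case False
  have "child X W j C b \<subseteq> C" using child_props[OF assms] by blast
  then show ?thesis using False by auto
qed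

context
  fixes X :: "'a::metric_space set" and W :: "nat \<Rightarrow> 'a set"
  assumes cX: "cantor_space X" and cW: "\<forall>j. clop X (W j)"
begin

lemma node_props: "clop X (node X W z n) \<and> node X W z n \<noteq> {}"
proof (induction n)
  case 0
  have "compact X" "X \<noteq> {}" using cX unfolding cantor_space_def by auto
  then show ?case by (simp add: clop_X)
next
  case (Suc n)
  then show ?case using child_props[OF cX cW] by simp
qed

lemma node_Suc_sub: "node X W z (Suc n) \<subseteq> node X W z n"
  using child_props[OF cX cW] node_props by simp

lemma node_mono: "m \<le> n \<Longrightarrow> node X W z n \<subseteq> node X W z m"
proof (induction n)
  case 0 then show ?case by simp
next
  case (Suc n)
  then show ?case using node_Suc_sub by (metis le_Suc_eq order_refl subset_trans)
qed

lemma node_sub_X: "node X W z n \<subseteq> X"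
  using node_mono[of 0 n z] by simp


lemma node_prefix: "(\<forall>k<n. z k = w k) \<Longrightarrow> node X W z n = node X W w n"
  by (induction n) auto

lemma Pn_node: "Pn X W x n = node X W (phi X W x) n"
  by (induction n) (auto simp: phi_def)

lemma x_in_Pn: "x \<in> X \<Longrightarrow> x \<in> Pn X W x n"
  by (induction n) (auto simp: child_def)

lemma node_phi: "y \<in> node X W z n \<Longrightarrow> \<forall>k<n. phi X W y k = z k"
proof (induction n)
  case 0 then show ?case by simp
next
  case (Suc n)
  have sub: "node X W z (Suc n) \<subseteq> node X W z n" by (rule node_Suc_sub)
  then have IH: "\<forall>k<n. phi X W y k = z k" using Suc by blast
  then have "Pn X W y n = node X W z n" using Pn_node node_prefix by metis
  then have "phi X W y n = (y \<in> splitA X W n (node X W z n))" by (simp add: phi_def)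
  moreover have "y \<in> child X W n (node X W z n) (z n)" using Suc.prems by simp
  ultimately have "phi X W y n = z n" unfolding child_def by (cases "z n") auto
  then show ?case using IH less_Suc_eq by auto
qed

lemma node_sep:
  assumes "y \<in> node X W z n" "y' \<in> node X W z n" "j < n"
  shows "y \<in> W j \<longleftrightarrow> y' \<in> W j"
proof -
  have "node X W z n \<subseteq> node X W z (Suc j)"
  proof -
    show ?thesis by (rule node_mono) (use assms(3) in simp)
  qed
  moreover have "node X W z (Suc j) \<subseteq> W j \<or> node X W z (Suc j) \<inter> W j = {}"
    using child_sep[OF cX cW] node_props by simp
  ultimately show ?thesis using assms(1,2) by blast
qed

end



context
  fixes X :: "'a::metric_space set" and W :: "nat \<Rightarrow> 'a set"
  assumes cX: "cantor_space X" and cW: "\<forall>j. clop X (W j)"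
    and sepW: "\<forall>e>0. \<exists>J. \<forall>a\<in>X. \<forall>b\<in>X. (\<forall>j<J. a \<in> W j \<longleftrightarrow> b \<in> W j) \<longrightarrow> dist a b < e"
begin

lemmas xPn = x_in_Pn[OF cX cW]
lemmas PnN = Pn_node[OF cX cW]
lemmas nprefix = node_prefix[OF cX cW]
lemmas nphi = node_phi[OF cX cW]
lemmas nsep = node_sep[OF cX cW]
lemmas nprops = node_props[OF cX cW]
lemmas nmono = node_mono[OF cX cW]
lemmas nsubX = node_sub_X[OF cX cW]

lemma phi_B: "e > 0 \<Longrightarrow> \<exists>n. \<forall>a\<in>X. \<forall>b\<in>X. (\<forall>k<n. phi X W a k = phi X W b k) \<longrightarrow> dist a b < e"
proof -
  assume "e > 0"
  then obtain J where J: "\<forall>a\<in>X. \<forall>b\<in>X. (\<forall>j<J. a \<in> W j \<longleftrightarrow> b \<in> W j) \<longrightarrow> dist a b < e"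
    using sepW by blast
  have "\<forall>a\<in>X. \<forall>b\<in>X. (\<forall>k<J. phi X W a k = phi X W b k) \<longrightarrow> dist a b < e"
  proof (intro ballI impI)
    fix a b assume a: "a \<in> X" and b: "b \<in> X" and ab: "\<forall>k<J. phi X W a k = phi X W b k"
    have "a \<in> node X W (phi X W a) J" using xPn[OF a] PnN by metis
    moreover have "b \<in> node X W (phi X W b) J" using xPn[OF b] PnN by metis
    moreover have "node X W (phi X W a) J = node X W (phi X W b) J" using ab nprefix by metis
    ultimately have "\<forall>j<J. a \<in> W j \<longleftrightarrow> b \<in> W j" using nsep by metis
    then show "dist a b < e" using J a b by blast
  qed
  then show ?thesis by blast
qed

lemma phi_inj: "inj_on (phi X W) X"
proof (rule inj_onI)
  fix a b assume a: "a \<in> X" and b: "b \<in> X" and eq: "phi X W a = phi X W b"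
  have "dist a b < e" if "e > 0" for e using phi_B[OF that] a b eq by metis
  then show "a = b" by (metis dist_pos_lt less_irrefl)
qed

lemma phi_surj: "\<exists>x\<in>X. phi X W x = z"
proof -
  have cXX: "compact X" using cX unfolding cantor_space_def by auto
  have H: "\<forall>A. (\<forall>a\<in>A. closed a) \<longrightarrow> (\<forall>B\<subseteq>A. finite B \<longrightarrow> X \<inter> \<Inter>B \<noteq> {}) \<longrightarrow> X \<inter> \<Inter>A \<noteq> {}"
    using iffD1[OF compact_fip cXX] .
  have H1: "\<forall>a\<in>range (node X W z). closed a"
      using nprops unfolding clop_def by (auto intro: compact_imp_closed)
  have H2: "\<forall>B\<subseteq>range (node X W z). finite B \<longrightarrow> X \<inter> \<Inter>B \<noteq> {}"
  proof (intro allI impI)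
    fix B assume B: "B \<subseteq> range (node X W z)" "finite B"
    then obtain I where I: "finite I" "B = node X W z ` I" by (meson finite_subset_image)
    then obtain N where N: "I \<subseteq> {..<N}" using finite_nat_iff_bounded by blast
    have "node X W z N \<subseteq> node X W z i" if "i \<in> I" for i
      using N that nmono by (meson lessThan_iff less_imp_le subsetD)
    then have "node X W z N \<subseteq> X \<inter> \<Inter>B" using I(2) nsubX by blast
    then show "X \<inter> \<Inter>B \<noteq> {}" using node_props[OF cX cW, of z N] by blast
  qed
  have "X \<inter> \<Inter>(range (node X W z)) \<noteq> {}"
    using mp[OF mp[OF spec[OF H, of "range (node X W z)"] H1] H2] .
  then obtain x where x: "x \<in> X" "\<forall>n. x \<in> node X W z n" by blast
  have "phi X W x = z"
  proof
    fix k show "phi X W x k = z k" using nphi[OF x(2)[rule_format, of "Suc k"]] by simp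
  qed
  then show ?thesis using x by blast
qed

lemma phi_A: "\<exists>d>0. \<forall>a\<in>X. \<forall>b\<in>X. dist a b < d \<longrightarrow> (\<forall>k<n. phi X W a k = phi X W b k)"
proof -
  have cXX: "compact X" using cX unfolding cantor_space_def by auto
  define C where "C = {T. open T \<and> (\<exists>z. X \<inter> T = node X W z n)}"
  have cov: "X \<subseteq> \<Union>C"
  proof
    fix x assume x: "x \<in> X"
    have "openin (top_of_set X) (node X W (phi X W x) n)"
      using nprops unfolding clop_def by blast
    then obtain T where T: "open T" "node X W (phi X W x) n = X \<inter> T" by (auto simp: openin_open)
    have "x \<in> node X W (phi X W x) n" using xPn[OF x] PnN by metis
    then show "x \<in> \<Union>C" using T unfolding C_def by blast
  qed
  then have Cne: "C \<noteq> {}" using cX unfolding cantor_space_def by auto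
  have ope: "\<And>B. B \<in> C \<Longrightarrow> open B" unfolding C_def by auto
  obtain d where d: "0 < d" "\<And>T. T \<subseteq> X \<Longrightarrow> diameter T < d \<Longrightarrow> \<exists>B\<in>C. T \<subseteq> B"
    using Lebesgue_number_lemma[OF cXX Cne cov ope] by auto
  show ?thesis
  proof (intro exI[of _ d] conjI ballI impI allI)
    show "0 < d" by fact
    fix a b k assume a: "a \<in> X" and b: "b \<in> X" and ab: "dist a b < d" and k: "k < n"
    have "diameter {a, b} \<le> dist a b"
      unfolding diameter_def by (auto simp: dist_commute intro!: cSup_least)
    then obtain B where B: "B \<in> C" "{a, b} \<subseteq> B" using d(2)[of "{a,b}"] a b ab by force
    then obtain z where z: "X \<inter> B = node X W z n" unfolding C_def by blast
    have "a \<in> node X W z n" "b \<in> node X W z n" using z B a b by auto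
    then show "phi X W a k = phi X W b k" using nphi k by metis
  qed
qed
end

lemma cantor_coding:
  fixes X :: "'a::metric_space set"
  assumes cX: "cantor_space X"
  shows "\<exists>\<phi>::'a \<Rightarrow> nat \<Rightarrow> bool. inj_on \<phi> X \<and> (\<forall>z. \<exists>x\<in>X. \<phi> x = z) \<and>
    (\<forall>n. \<exists>d>0. \<forall>a\<in>X. \<forall>b\<in>X. dist a b < d \<longrightarrow> (\<forall>k<n. \<phi> a k = \<phi> b k)) \<and>
    (\<forall>e>0. \<exists>n. \<forall>a\<in>X. \<forall>b\<in>X. (\<forall>k<n. \<phi> a k = \<phi> b k) \<longrightarrow> dist a b < e)"
proof -
  obtain W :: "nat \<Rightarrow> 'a set" where cW: "\<forall>j. clop X (W j)"
    and sepW: "\<forall>e>0. \<exists>J. \<forall>a\<in>X. \<forall>b\<in>X. (\<forall>j<J. a \<in> W j \<longleftrightarrow> b \<in> W j) \<longrightarrow> dist a b < e"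
    using sep_seq[OF cX] by blast
  show ?thesis
    apply (rule exI[of _ "phi X W"])
    using phi_inj[OF cX cW sepW] phi_surj[OF cX cW sepW] phi_A[OF cX cW sepW] phi_B[OF cX cW sepW]
    by blast
qed




definition odo :: "(nat \<Rightarrow> bool) \<Rightarrow> nat \<Rightarrow> bool" where
  "odo z n = (z n \<noteq> (\<forall>k<n. z k))"
definition odoi :: "(nat \<Rightarrow> bool) \<Rightarrow> nat \<Rightarrow> bool" where
  "odoi z n = (z n \<noteq> (\<forall>k<n. \<not> z k))"
definition Tn :: "nat \<Rightarrow> (nat \<Rightarrow> bool) \<Rightarrow> nat \<Rightarrow> bool" where
  "Tn N z n = (if n < N then odo z n else z n)"
definition Ti :: "nat \<Rightarrow> (nat \<Rightarrow> bool) \<Rightarrow> nat \<Rightarrow> bool" where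
  "Ti N z n = (if n < N then odoi z n else z n)"

lemma odo_carry: "(\<forall>k<n. \<not> odo z k) \<longleftrightarrow> (\<forall>k<n. z k)"
proof (induction n)
  case 0 then show ?case by simp
next
  case (Suc n)
  have "(\<forall>k<Suc n. \<not> odo z k) \<longleftrightarrow> (\<forall>k<n. \<not> odo z k) \<and> \<not> odo z n" by (auto simp: less_Suc_eq)
  also have "\<dots> \<longleftrightarrow> (\<forall>k<n. z k) \<and> z n" using Suc by (auto simp: odo_def)
  also have "\<dots> \<longleftrightarrow> (\<forall>k<Suc n. z k)" by (auto simp: less_Suc_eq)
  finally show ?case .
qed

lemma odoi_carry: "(\<forall>k<n. odoi z k) \<longleftrightarrow> (\<forall>k<n. \<not> z k)"
proof (induction n)
  case 0 then show ?case by simp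
next
  case (Suc n)
  have "(\<forall>k<Suc n. odoi z k) \<longleftrightarrow> (\<forall>k<n. odoi z k) \<and> odoi z n" by (auto simp: less_Suc_eq)
  also have "\<dots> \<longleftrightarrow> (\<forall>k<n. \<not> z k) \<and> \<not> z n" using Suc by (auto simp: odoi_def)
  also have "\<dots> \<longleftrightarrow> (\<forall>k<Suc n. \<not> z k)" by (auto simp: less_Suc_eq)
  finally show ?case .
qed

lemma odoi_odo [simp]: "odoi (odo z) = z"
proof (rule ext)
  fix x
  have "odoi (odo z) x = (odo z x \<noteq> (\<forall>k<x. z k))" by (simp add: odoi_def odo_carry)
  also have "\<dots> = z x" unfolding odo_def by argo
  finally show "odoi (odo z) x = z x" .
qed

lemma odo_odoi [simp]: "odo (odoi z) = z"
proof (rule ext)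
  fix x
  have "odo (odoi z) x = (odoi z x \<noteq> (\<forall>k<x. \<not> z k))" by (simp add: odo_def odoi_carry)
  also have "\<dots> = z x" unfolding odoi_def by argo
  finally show "odo (odoi z) x = z x" .
qed

lemma Ti_Tn [simp]: "Ti N (Tn N z) = z"
proof (rule ext)
  fix n
  show "Ti N (Tn N z) n = z n"
  proof (cases "n < N")
    case True
    have "(\<forall>k<n. \<not> Tn N z k) \<longleftrightarrow> (\<forall>k<n. \<not> odo z k)" using True by (auto simp: Tn_def)
    then have "Ti N (Tn N z) n = (odo z n \<noteq> (\<forall>k<n. z k))" using True by (simp add: Ti_def Tn_def odoi_def odo_carry)
    also have "\<dots> = z n" unfolding odo_def by argo
    finally show ?thesis .
  qed (simp add: Ti_def Tn_def)
qed

lemma Tn_Ti [simp]: "Tn N (Ti N z) = z"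
proof (rule ext)
  fix n
  show "Tn N (Ti N z) n = z n"
  proof (cases "n < N")
    case True
    have "(\<forall>k<n. Ti N z k) \<longleftrightarrow> (\<forall>k<n. odoi z k)" using True by (auto simp: Ti_def)
    then have "Tn N (Ti N z) n = (odoi z n \<noteq> (\<forall>k<n. \<not> z k))" using True by (simp add: Ti_def Tn_def odo_def odoi_carry)
    also have "\<dots> = z n" unfolding odoi_def by argo
    finally show ?thesis .
  qed (simp add: Ti_def Tn_def)
qed

definition pres :: "((nat \<Rightarrow> bool) \<Rightarrow> nat \<Rightarrow> bool) \<Rightarrow> bool" where
  "pres S \<longleftrightarrow> (\<forall>n z w. (\<forall>k<n. z k = w k) \<longrightarrow> (\<forall>k<n. S z k = S w k))"

lemma pres_odo: "pres odo" unfolding pres_def odo_def by auto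
lemma pres_odoi: "pres odoi" unfolding pres_def odoi_def by auto
lemma pres_Tn: "pres (Tn N)" unfolding pres_def Tn_def odo_def by auto
lemma pres_Ti: "pres (Ti N)" unfolding pres_def Ti_def odoi_def by auto

definition val :: "nat \<Rightarrow> (nat \<Rightarrow> bool) \<Rightarrow> nat" where
  "val n z = (\<Sum>k<n. if z k then 2^k else 0)"

lemma val_Suc: "val (Suc n) z = val n z + (if z n then 2^n else 0)"
  by (simp add: val_def)

lemma val_0 [simp]: "val 0 z = 0" by (simp add: val_def)

lemma val_lt: "val n z < 2^n"
  by (induction n) (auto simp: val_Suc)

lemma val_odo: "((\<forall>k<n. z k) \<longrightarrow> val n (odo z) + 2^n = val n z + 1) \<and> (\<not>(\<forall>k<n. z k) \<longrightarrow> val n (odo z) = val n z + 1)"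
proof (induction n)
  case 0 then show ?case by simp
next
  case (Suc n)
  have o: "odo z n = (z n \<noteq> (\<forall>k<n. z k))" by (simp add: odo_def)
  have c: "(\<forall>k<Suc n. z k) = ((\<forall>k<n. z k) \<and> z n)" by (auto simp: less_Suc_eq)
  show ?case
  proof (cases "\<forall>k<n. z k")
    case cT: True
    then have h: "val n (odo z) + 2^n = val n z + 1" using Suc.IH by blast
    show ?thesis
    proof (cases "z n")
      case True
      then have "odo z n = False" using o cT by simp
      then show ?thesis using h cT True unfolding c val_Suc by simp
    next
      case False
      then have "odo z n = True" using o cT by simp
      then show ?thesis using h cT False unfolding c val_Suc by simp
    qed
  next
    case cF: False
    then have h: "val n (odo z) = val n z + 1" using Suc.IH by blast
    have "odo z n = z n" using o cF by simp
    moreover have "\<not> (\<forall>k<Suc n. z k)" using cF c by simp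
    ultimately show ?thesis using h unfolding val_Suc by simp
  qed
qed

lemma val_odo_mod: "val n (odo z) = (val n z + 1) mod 2^n"
proof (cases "\<forall>k<n. z k")
  case True
  then have "val n (odo z) + 2^n = val n z + 1" using val_odo[of n z] by blast
  then show ?thesis using val_lt[of n "odo z"]
    by (metis add.commute mod_add_self1 mod_less)
next
  case False
  then have "val n (odo z) = val n z + 1" using val_odo[of n z] by blast
  then show ?thesis using val_lt[of n "odo z"] by simp
qed

lemma val_inj: "val n z = val n w \<Longrightarrow> \<forall>k<n. z k = w k"
proof (induction n)
  case 0 then show ?case by simp
next
  case (Suc n)
  have "z n = w n"
  proof (rule ccontr)
    assume "z n \<noteq> w n"
    then show False using Suc.prems val_lt[of n z] val_lt[of n w] unfolding val_Suc
      by (cases "z n") auto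
  qed
  then have "val n z = val n w" using Suc.prems unfolding val_Suc by simp
  then show ?case using Suc.IH \<open>z n = w n\<close> less_Suc_eq by auto
qed

lemma val_cong: "(\<forall>k<n. z k = w k) \<Longrightarrow> val n z = val n w"
  unfolding val_def by (rule sum.cong) auto

lemma val_odo_iter: "val n ((odo ^^ m) z) = (val n z + m) mod 2^n"
proof (induction m)
  case 0 then show ?case using val_lt by simp
next
  case (Suc m)
  then show ?case by (simp add: val_odo_mod mod_Suc_eq)
qed

lemma Tn_iter_high: "N \<le> k \<Longrightarrow> (Tn N ^^ m) z k = z k"
  by (induction m) (auto simp: Tn_def)

lemma val_Tn_iter: "val N ((Tn N ^^ m) z) = (val N z + m) mod 2^N"
proof (induction m)
  case 0 then show ?case using val_lt by simp
next
  case (Suc m)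
  have "val N (Tn N ((Tn N ^^ m) z)) = val N (odo ((Tn N ^^ m) z))"
    by (rule val_cong) (simp add: Tn_def)
  then show ?case using Suc by (simp add: val_odo_mod mod_Suc_eq)
qed

lemma Tn_period: "(Tn N ^^ (2^N)) z = z"
proof (rule ext)
  fix k
  have "val N ((Tn N ^^ (2^N)) z) = val N z"
    using val_Tn_iter[of N "2^N" z] val_lt[of N z] by simp
  then have "\<forall>k<N. (Tn N ^^ (2^N)) z k = z k" by (rule val_inj)
  then show "(Tn N ^^ (2^N)) z k = z k" using Tn_iter_high by (cases "k < N") auto
qed

lemma odo_aperiodic: "0 < m \<Longrightarrow> (odo ^^ m) z \<noteq> z"
proof
  assume m: "0 < m" and eq: "(odo ^^ m) z = z"
  define v where "v = val m z"
  have e: "(v + m) mod 2^m = v" using val_odo_iter[of m m z] eq unfolding v_def by simp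
  have mlt: "m < 2^m" by (rule less_exp)
  have vlt: "v < 2^m" unfolding v_def by (rule val_lt)
  show False
  proof (cases "v + m < 2^m")
    case True
    then have "(v + m) mod 2^m = v + m" by simp
    then show False using e m by simp
  next
    case False
    then have "(v + m) mod 2^m = (v + m - 2^m) mod 2^m" by (simp add: le_mod_geq)
    also have "\<dots> = v + m - 2^m"
    proof -
      have "v + m - 2^m < 2^m" using vlt mlt by linarith
      then show ?thesis by (rule mod_less)
    qed
    finally show False using e mlt False by linarith
  qed
qed




lemma presD: "pres S \<Longrightarrow> \<forall>k<n. z k = w k \<Longrightarrow> \<forall>k<n. S z k = S w k"
  unfolding pres_def by blast

context
  fixes X :: "'a::metric_space set" and p :: "'a \<Rightarrow> nat \<Rightarrow> bool"
  assumes cX: "cantor_space X" and pinj: "inj_on p X" and psurj: "\<forall>z. \<exists>x\<in>X. p x = z"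
    and pA: "\<forall>n. \<exists>d>0. \<forall>a\<in>X. \<forall>b\<in>X. dist a b < d \<longrightarrow> (\<forall>k<n. p a k = p b k)"
    and pB: "\<forall>e>0. \<exists>n. \<forall>a\<in>X. \<forall>b\<in>X. (\<forall>k<n. p a k = p b k) \<longrightarrow> dist a b < e"
begin

definition cj :: "((nat \<Rightarrow> bool) \<Rightarrow> nat \<Rightarrow> bool) \<Rightarrow> 'a \<Rightarrow> 'a" where
  "cj S x = inv_into X p (S (p x))"

lemma pimg: "z \<in> p ` X" using psurj by (metis image_iff)

lemma cj_in: "cj S x \<in> X"
  unfolding cj_def using pimg by (rule inv_into_into)

lemma p_cj: "p (cj S x) = S (p x)"
  unfolding cj_def using pimg by (rule f_inv_into_f)

lemma cj_p: "x \<in> X \<Longrightarrow> inv_into X p (p x) = x"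
  using pinj by (rule inv_into_f_f)

lemma cj_cont: assumes "pres S" shows "continuous_on X (cj S)"
  unfolding continuous_on_iff
proof (intro ballI allI impI)
  fix x e assume x: "x \<in> X" and e: "(0::real) < e"
  obtain n where n: "\<forall>a\<in>X. \<forall>b\<in>X. (\<forall>k<n. p a k = p b k) \<longrightarrow> dist a b < e" using pB e by blast
  obtain d where d: "d > 0" "\<forall>a\<in>X. \<forall>b\<in>X. dist a b < d \<longrightarrow> (\<forall>k<n. p a k = p b k)" using spec[OF pA, of n] by blast
  show "\<exists>d>0. \<forall>x'\<in>X. dist x' x < d \<longrightarrow> dist (cj S x') (cj S x) < e"
  proof (intro exI[of _ d] conjI ballI impI)
    show "d > 0" by fact
    fix x' assume x': "x' \<in> X" and dx: "dist x' x < d"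
    have "\<forall>k<n. p x' k = p x k" using d(2) x x' dx by blast
    then have "\<forall>k<n. S (p x') k = S (p x) k" by (rule presD[OF assms])
    then have "\<forall>k<n. p (cj S x') k = p (cj S x) k" by (simp add: p_cj)
    then show "dist (cj S x') (cj S x) < e" using n cj_in[of S x'] cj_in[of S x] by blast
  qed
qed

lemma cj_homeo:
  assumes "pres S" "pres S'" "\<And>z. S' (S z) = z" "\<And>z. S (S' z) = z"
  shows "homeomorphism X X (cj S) (cj S')"
proof (rule homeomorphismI)
  show "continuous_on X (cj S)" by (rule cj_cont[OF assms(1)])
  show "continuous_on X (cj S')" by (rule cj_cont[OF assms(2)])
  show "cj S ` X \<subseteq> X" using cj_in by blast
  show "cj S' ` X \<subseteq> X" using cj_in by blast
  fix x assume "x \<in> X"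
  then show "cj S' (cj S x) = x" by (simp add: cj_def[of S'] p_cj assms(3) cj_p)
next
  fix x assume "x \<in> X"
  then show "cj S (cj S' x) = x" by (simp add: cj_def[of S] p_cj assms(4) cj_p)
qed

lemma homeo_inv_eq: assumes H: "homeomorphism X X f g" and x: "x \<in> X" shows "inv_into X f x = g x"
proof -
  have fg: "f (g x) = x" using H x unfolding homeomorphism_def by blast
  have gx: "g x \<in> X" using H x unfolding homeomorphism_def by blast
  have gf: "\<forall>y\<in>X. g (f y) = y" using H unfolding homeomorphism_def by blast
  have inj: "inj_on f X" using gf by (metis inj_on_inverseI)
  have "inv_into X f (f (g x)) = g x" using inj gx by (rule inv_into_f_f)
  then show ?thesis using fg by simp
qed

lemma iter_cj: "x \<in> X \<Longrightarrow> (cj S ^^ m) x = inv_into X p ((S ^^ m) (p x))"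
proof (induction m)
  case 0 then show ?case by (simp add: cj_p)
next
  case (Suc m)
  then show ?case by (simp add: cj_def[of S] f_inv_into_f[OF pimg])
qed

lemma dC0_le: assumes h: "\<And>x. x \<in> X \<Longrightarrow> dist (f x) (g x) < e" shows "dC0 X f g \<le> e"
proof -
  have ne: "X \<noteq> {}" using cX unfolding cantor_space_def by auto
  show ?thesis unfolding dC0_def
  proof (rule cSUP_least)
    show "X \<noteq> {}" by (rule ne)
    fix x assume "x \<in> X"
    then show "dist (f x) (g x) \<le> e" using h by (simp add: less_imp_le)
  qed
qed

lemma cj_close:
  assumes "\<forall>a\<in>X. \<forall>b\<in>X. (\<forall>k<n. p a k = p b k) \<longrightarrow> dist a b < e"
    and "\<And>z. \<forall>k<n. S1 z k = S2 z k"
  shows "dC0 X (cj S1) (cj S2) \<le> e"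
proof (rule dC0_le)
  fix x assume "x \<in> X"
  have "\<forall>k<n. p (cj S1 x) k = p (cj S2 x) k" using assms(2) by (simp add: p_cj)
  then show "dist (cj S1 x) (cj S2 x) < e" using assms(1) cj_in[of S1 x] cj_in[of S2 x] by blast
qed

end

context
  fixes X :: "'a::metric_space set" and p :: "'a \<Rightarrow> nat \<Rightarrow> bool"
  assumes cX: "cantor_space X" and pinj: "inj_on p X" and psurj: "\<forall>z. \<exists>x\<in>X. p x = z"
    and pA: "\<forall>n. \<exists>d>0. \<forall>a\<in>X. \<forall>b\<in>X. dist a b < d \<longrightarrow> (\<forall>k<n. p a k = p b k)"
    and pB: "\<forall>e>0. \<exists>n. \<forall>a\<in>X. \<forall>b\<in>X. (\<forall>k<n. p a k = p b k) \<longrightarrow> dist a b < e"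
begin

lemmas ctx = cX pinj psurj pA pB

lemma hF: "homeomorphism X X (cj X p odo) (cj X p odoi)"
  by (rule cj_homeo[OF ctx pres_odo pres_odoi]) simp_all

lemma invF: "x \<in> X \<Longrightarrow> inv_into X (cj X p odo) x = cj X p odoi x"
  by (rule homeo_inv_eq[OF ctx hF])

lemma iter_in: "x \<in> X \<Longrightarrow> (cj X p S ^^ m) x \<in> X"
  by (cases m) (simp_all add: cj_in[OF ctx])

lemma not_ts: "\<not> topologically_stable X (cj X p odo)"
proof
  assume ts: "topologically_stable X (cj X p odo)"
  obtain \<delta> where \<delta>: "\<delta> > 0" "\<forall>g\<in>homeos X. Dhom X (cj X p odo) g < \<delta> \<longrightarrow>
        (\<exists>h. continuous_on X h \<and> h ` X \<subseteq> X \<and> dC0 X h id < 1 \<and> (\<forall>x\<in>X. h (g x) = cj X p odo (h x)))"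
    using ts unfolding topologically_stable_def by (meson zero_less_one)
  obtain n where n: "\<forall>a\<in>X. \<forall>b\<in>X. (\<forall>k<n. p a k = p b k) \<longrightarrow> dist a b < \<delta>/2"
    using pB \<delta>(1) by (meson half_gt_zero)
  have hG: "homeomorphism X X (cj X p (Tn n)) (cj X p (Ti n))"
    by (rule cj_homeo[OF ctx pres_Tn pres_Ti]) simp_all
  then have gH: "cj X p (Tn n) \<in> homeos X" unfolding homeos_def by blast
  have d1: "dC0 X (cj X p odo) (cj X p (Tn n)) \<le> \<delta>/2"
    by (rule cj_close[OF ctx n]) (simp add: Tn_def)
  have "dC0 X (inv_into X (cj X p odo)) (inv_into X (cj X p (Tn n))) = dC0 X (cj X p odoi) (cj X p (Ti n))"
    unfolding dC0_def by (rule SUP_cong) (simp_all add: invF homeo_inv_eq[OF ctx hG])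
  moreover have "dC0 X (cj X p odoi) (cj X p (Ti n)) \<le> \<delta>/2"
    by (rule cj_close[OF ctx n]) (simp add: Ti_def)
  ultimately have "Dhom X (cj X p odo) (cj X p (Tn n)) < \<delta>"
    using d1 \<delta>(1) unfolding Dhom_def by simp
  then obtain h where h: "h ` X \<subseteq> X" "\<forall>x\<in>X. h (cj X p (Tn n) x) = cj X p odo (h x)"
    using \<delta>(2) gH by blast
  obtain x0 where x0: "x0 \<in> X" using cX unfolding cantor_space_def by auto
  have it: "h ((cj X p (Tn n) ^^ m) x) = (cj X p odo ^^ m) (h x)" if "x \<in> X" for m x
  proof (induction m)
    case 0 then show ?case by simp
  next
    case (Suc m)
    have "(cj X p (Tn n) ^^ m) x \<in> X" using iter_in that by blast
    then show ?case using Suc h(2) by simp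
  qed
  have "(cj X p (Tn n) ^^ (2^n)) x0 = x0"
    using iter_cj[OF ctx x0] Tn_period cj_p[OF ctx x0] by simp
  then have per: "(cj X p odo ^^ (2^n)) (h x0) = h x0" using it[OF x0, of "2^n"] by simp
  have y: "h x0 \<in> X" using h(1) x0 by blast
  have "inv_into X p ((odo ^^ (2^n)) (p (h x0))) = h x0"
    using per iter_cj[OF ctx y] by simp
  then have "p (inv_into X p ((odo ^^ (2^n)) (p (h x0)))) = p (h x0)" by simp
  then have "(odo ^^ (2^n)) (p (h x0)) = p (h x0)" using f_inv_into_f[OF pimg[OF ctx]] by simp
  then show False using odo_aperiodic[of "2^n"] by simp
qed

lemma dtilde_ge:
  assumes "\<forall>i. x i \<in> X" "\<forall>i. y i \<in> X"
  shows "dist (x 0) (y 0) \<le> dtilde x y"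
proof -
  have "bounded X" using cX unfolding cantor_space_def by (auto intro: compact_imp_bounded)
  then obtain B where B: "\<forall>a\<in>X. \<forall>b\<in>X. dist a b \<le> B" unfolding bounded_two_points by blast
  have "(1/2::real) ^ nat \<bar>i\<bar> * dist (x i) (y i) \<le> B" for i
  proof -
    have "(1/2::real) ^ nat \<bar>i\<bar> * dist (x i) (y i) \<le> dist (x i) (y i)"
      by (rule mult_left_le_one_le) (auto intro: power_le_one)
    also have "\<dots> \<le> B" using B assms by blast
    finally show ?thesis .
  qed
  then have bdd: "bdd_above (range (\<lambda>i. (1/2::real) ^ nat \<bar>i\<bar> * dist (x i) (y i)))"
    by (intro bdd_aboveI2) 
  have "(1/2::real) ^ nat \<bar>0::int\<bar> * dist (x 0) (y 0) \<le> dtilde x y"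
    unfolding dtilde_def by (rule cSUP_upper[OF UNIV_I bdd])
  then show ?thesis by simp
qed

lemma cs: "continuous_shadowing X (cj X p odo)"
  unfolding continuous_shadowing_def
proof (intro allI impI)
  fix \<epsilon> :: real assume \<epsilon>: "\<epsilon> > 0"
  obtain n where n: "\<forall>a\<in>X. \<forall>b\<in>X. (\<forall>k<n. p a k = p b k) \<longrightarrow> dist a b < \<epsilon>"
    using pB \<epsilon> by blast
  obtain d where d: "d > 0" "\<forall>a\<in>X. \<forall>b\<in>X. dist a b < d \<longrightarrow> (\<forall>k<n. p a k = p b k)"
    using spec[OF pA, of n] by blast
  define PO where "PO = pseudo_orbits X (cj X p odo) (d/2)"
  have R1: "\<forall>x\<in>PO. x 0 \<in> X" unfolding PO_def pseudo_orbits_def by blast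
  have R2: "\<forall>x\<in>PO. \<forall>e>0. \<exists>\<eta>>0. \<forall>y\<in>PO. dtilde x y < \<eta> \<longrightarrow> dist (x 0) (y 0) < e"
  proof (intro ballI allI impI)
    fix x e assume x: "x \<in> PO" and e: "(0::real) < e"
    show "\<exists>\<eta>>0. \<forall>y\<in>PO. dtilde x y < \<eta> \<longrightarrow> dist (x 0) (y 0) < e"
    proof (intro exI[of _ e] conjI ballI impI)
      show "0 < e" by fact
      fix y assume y: "y \<in> PO" and dy: "dtilde x y < e"
      have "dist (x 0) (y 0) \<le> dtilde x y"
        by (rule dtilde_ge) (use x y in \<open>auto simp: PO_def pseudo_orbits_def\<close>)
      then show "dist (x 0) (y 0) < e" using dy by linarith
    qed
  qed
  have R3: "\<forall>x\<in>PO. \<forall>i. dist (iter_int X (cj X p odo) i (x 0)) (x i) \<le> \<epsilon>"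
  proof (intro ballI allI)
    fix x i assume x: "x \<in> PO"
    have xX: "\<And>i. x i \<in> X" using x unfolding PO_def pseudo_orbits_def by blast
    have step: "\<forall>k<n. p (cj X p odo (x j)) k = p (x (j+1)) k" for j
    proof -
      have "dist (cj X p odo (x j)) (x (j+1)) \<le> d/2" using x unfolding PO_def pseudo_orbits_def by blast
      then have "dist (cj X p odo (x j)) (x (j+1)) < d" using d(1) by linarith
      then show ?thesis using d(2) cj_in[OF ctx] xX by blast
    qed
    have fwd: "\<forall>k<n. p ((cj X p odo ^^ m) (x 0)) k = p (x (int m)) k" for m
    proof (induction m)
      case 0 then show ?case by simp
    next
      case (Suc m)
      have "\<forall>k<n. odo (p ((cj X p odo ^^ m) (x 0))) k = odo (p (x (int m))) k"
        by (rule presD[OF pres_odo Suc.IH])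
      then have "\<forall>k<n. p ((cj X p odo ^^ Suc m) (x 0)) k = p (cj X p odo (x (int m))) k"
        by (simp add: p_cj[OF ctx])
      then have "\<forall>k<n. p ((cj X p odo ^^ Suc m) (x 0)) k = p (x (int m + 1)) k"
        using step[of "int m"] by simp
      then show ?case by (simp add: add.commute)
    qed
    have bwd: "(inv_into X (cj X p odo) ^^ m) (x 0) \<in> X \<and>
       (\<forall>k<n. p ((inv_into X (cj X p odo) ^^ m) (x 0)) k = p (x (- int m)) k)" for m
    proof (induction m)
      case 0 then show ?case using xX by simp
    next
      case (Suc m)
      define y where "y = (inv_into X (cj X p odo) ^^ m) (x 0)"
      have yX: "y \<in> X" and IH: "\<forall>k<n. p y k = p (x (- int m)) k" using Suc.IH unfolding y_def by blast+
      have ystep: "(inv_into X (cj X p odo) ^^ Suc m) (x 0) = cj X p odoi y"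
        using invF[OF yX] unfolding y_def by simp
      define w where "w = x (- int m - 1)"
      have "\<forall>k<n. p (cj X p odo w) k = p (x (- int m)) k" using step[of "- int m - 1"] unfolding w_def by simp
      then have "\<forall>k<n. odo (p w) k = p y k" using IH by (simp add: p_cj[OF ctx])
      then have "\<forall>k<n. odoi (odo (p w)) k = odoi (p y) k" by (rule presD[OF pres_odoi])
      then have agr: "\<forall>k<n. p (cj X p odoi y) k = p w k" by (simp add: p_cj[OF ctx])
      have eqx: "x (- int (Suc m)) = x (- int m - 1)" by (rule arg_cong[of _ _ x]) simp
      have "(inv_into X (cj X p odo) ^^ Suc m) (x 0) \<in> X" unfolding ystep by (rule cj_in[OF ctx])
      moreover have "\<forall>k<n. p ((inv_into X (cj X p odo) ^^ Suc m) (x 0)) k = p (x (- int m - 1)) k"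
        unfolding ystep using agr unfolding w_def .
      ultimately show ?case unfolding eqx by blast
    qed
    show "dist (iter_int X (cj X p odo) i (x 0)) (x i) \<le> \<epsilon>"
    proof (cases "0 \<le> i")
      case True
      then have e1: "iter_int X (cj X p odo) i (x 0) = (cj X p odo ^^ nat i) (x 0)" by (simp add: iter_int_def)
      have e2: "x i = x (int (nat i))" using True by simp
      have "dist ((cj X p odo ^^ nat i) (x 0)) (x (int (nat i))) < \<epsilon>"
        using n fwd[of "nat i"] iter_in[OF xX[of 0]] xX by blast
      then show ?thesis using e1 e2 by simp
    next
      case False
      then have e1: "iter_int X (cj X p odo) i (x 0) = (inv_into X (cj X p odo) ^^ nat (- i)) (x 0)" by (simp add: iter_int_def)
      have e2: "x i = x (- int (nat (- i)))" using False by simp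
      have "dist ((inv_into X (cj X p odo) ^^ nat (- i)) (x 0)) (x (- int (nat (- i)))) < \<epsilon>"
        using n bwd[of "nat (- i)"] xX by blast
      then show ?thesis using e1 e2 by simp
    qed
  qed
  have "d/2 > 0" using d(1) by simp
  then show "\<exists>\<delta>>0. \<exists>r. (\<forall>x\<in>pseudo_orbits X (cj X p odo) \<delta>. r x \<in> X) \<and>
        (\<forall>x\<in>pseudo_orbits X (cj X p odo) \<delta>. \<forall>e>0. \<exists>\<eta>>0. \<forall>y\<in>pseudo_orbits X (cj X p odo) \<delta>.
            dtilde x y < \<eta> \<longrightarrow> dist (r x) (r y) < e) \<and>
        (\<forall>x\<in>pseudo_orbits X (cj X p odo) \<delta>. \<forall>i. dist (iter_int X (cj X p odo) i (r x)) (x i) \<le> \<epsilon>)"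
    apply (intro exI[of _ "d/2"] conjI)
     apply assumption
    apply (rule exI[of _ "\<lambda>x. x 0"])
    using R1 R2 R3 unfolding PO_def by blast
qed

lemma main_ctx: "\<exists>f\<in>homeos X. continuous_shadowing X f \<and> \<not> topologically_stable X f"
proof -
  have "cj X p odo \<in> homeos X" using hF unfolding homeos_def by blast
  then show ?thesis using cs not_ts by blast
qed

end

theorem corollary1p1:
  fixes X :: "'a::metric_space set"
  assumes "cantor_space X"
  shows "\<exists>f\<in>homeos X. continuous_shadowing X f \<and> \<not> topologically_stable X f"
proof -
  obtain p :: "'a \<Rightarrow> nat \<Rightarrow> bool" where p: "inj_on p X" "\<forall>z. \<exists>x\<in>X. p x = z"
    "\<forall>n. \<exists>d>0. \<forall>a\<in>X. \<forall>b\<in>X. dist a b < d \<longrightarrow> (\<forall>k<n. p a k = p b k)"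
    "\<forall>e>0. \<exists>n. \<forall>a\<in>X. \<forall>b\<in>X. (\<forall>k<n. p a k = p b k) \<longrightarrow> dist a b < e"
    using cantor_coding[OF assms] by blast
  show ?thesis by (rule main_ctx[OF assms p])
qed

end
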